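(* Let $k\ge 3$, $n_1=\cdots=n_k\ge 2$ and $r\in[k]$. The number of distinct isomorphism classes of graphs in the LC orbit $\mathcal{O}(CS^r_{n_1,\dots,n_k})$ is $\lceil k/2\rceil+k$.
   Context: The clique-star $CS^r_{n_1,\dots,n_k}$ has vertex set $U_1\sqcup\cdots\sqcup U_k$ with $|U_i|=n_i$; each $U_i$ is a clique, every vertex of $U_r$ is adjacent to every vertex of each $U_i$ with $i\ne r$, and there are no edges between $U_i$ and $U_l$ for distinct $i,l\ne r$. The local complement $c_v(G)$ complements the edges among the neighbours of $v$; $\mathcal{O}(G)$ is the set of all graphs on the labelled vertex set obtainable from $G$ by finite sequences of local complements. *)

theory Defs
  imports Main
begin

text \<open>A simple graph on a labelled vertex set V is represented by its symmetric,
irreflexive edge relation E, a subset of V \<times> V (each edge {x,y} appears as both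
(x,y) and (y,x)).\<close>

definition local_complement :: "'a \<Rightarrow> ('a \<times> 'a) set \<Rightarrow> ('a \<times> 'a) set" where
  "local_complement v E =
     {(x, y). ((x, y) \<in> E) \<noteq> (x \<noteq> y \<and> (v, x) \<in> E \<and> (v, y) \<in> E)}"

inductive_set lc_orbit :: "'a set \<Rightarrow> ('a \<times> 'a) set \<Rightarrow> ('a \<times> 'a) set set"
  for V E where
  base: "E \<in> lc_orbit V E"
| step: "F \<in> lc_orbit V E \<Longrightarrow> v \<in> V \<Longrightarrow> local_complement v F \<in> lc_orbit V E"

definition graph_iso :: "'a set \<Rightarrow> ('a \<times> 'a) set \<Rightarrow> ('a \<times> 'a) set \<Rightarrow> bool" where
  "graph_iso V E F \<longleftrightarrow>
     (\<exists>f. bij_betw f V V \<and> (\<forall>x\<in>V. \<forall>y\<in>V. (x, y) \<in> E \<longleftrightarrow> (f x, f y) \<in> F))"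

definition num_iso_classes :: "'a set \<Rightarrow> ('a \<times> 'a) set set \<Rightarrow> nat" where
  "num_iso_classes V S = card (S // {(E, F). E \<in> S \<and> F \<in> S \<and> graph_iso V E F})"

text \<open>Clique-star CS^r_{n_1,...,n_k}: vertices (i, j) with i \<in> {1..k}, j < n_i;
U_i = {i} \<times> {0..<n_i}.\<close>
definition cs_vertices :: "nat \<Rightarrow> (nat \<Rightarrow> nat) \<Rightarrow> (nat \<times> nat) set" where
  "cs_vertices k ns = {(i, j). i \<in> {1..k} \<and> j < ns i}"

definition clique_star :: "nat \<Rightarrow> (nat \<Rightarrow> nat) \<Rightarrow> nat \<Rightarrow> ((nat \<times> nat) \<times> (nat \<times> nat)) set" where
  "clique_star k ns r =
     {((i, j), (i', j')). (i, j) \<in> cs_vertices k ns \<and> (i', j') \<in> cs_vertices k ns \<and>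
        (i, j) \<noteq> (i', j') \<and> (i = i' \<or> i = r \<or> i' = r)}"

end

theory Submission
  imports Defs
begin

definition mainv :: "nat set \<Rightarrow> (nat \<Rightarrow> nat) \<Rightarrow> nat \<Rightarrow> nat \<Rightarrow> bool" where
  "mainv S s i j \<longleftrightarrow> (i \<notin> S \<or> j = s i)"

definition gA :: "nat \<Rightarrow> nat \<Rightarrow> nat \<Rightarrow> nat set \<Rightarrow> (nat \<Rightarrow> nat) \<Rightarrow> ((nat \<times> nat) \<times> (nat \<times> nat)) set" where
  "gA k n r S s = {((i,j),(i',j')). i \<in> {1..k} \<and> j < n \<and> i' \<in> {1..k} \<and> j' < n \<and> (i,j) \<noteq> (i',j') \<and>
     (if i = i' then (if i = r then even (card S) else (i \<in> S \<longrightarrow> (j = s i \<or> j' = s i)))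
      else ((i = r \<and> mainv S s i' j') \<or> (i' = r \<and> mainv S s i j)))}"

definition gM :: "nat \<Rightarrow> nat \<Rightarrow> nat set \<Rightarrow> (nat \<Rightarrow> nat) \<Rightarrow> ((nat \<times> nat) \<times> (nat \<times> nat)) set" where
  "gM k n D s = {((i,j),(i',j')). i \<in> {1..k} \<and> j < n \<and> i' \<in> {1..k} \<and> j' < n \<and> (i,j) \<noteq> (i',j') \<and>
     (if i = i' then i \<in> D \<and> (j = s i \<or> j' = s i)
      else mainv D s i j \<and> mainv D s i' j')}"

lemma pair_set_eqI:
  assumes "\<And>i j i' j'. ((i,j),(i',j')) \<in> A \<longleftrightarrow> ((i,j),(i',j')) \<in> B"
  shows "A = B"
  using assms by (intro set_eqI) (metis prod.collapse)

lemma mem_lc: "(x, y) \<in> local_complement v E \<longleftrightarrow> ((x,y) \<in> E) \<noteq> (x \<noteq> y \<and> (v,x) \<in> E \<and> (v,y) \<in> E)"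
  by (simp add: local_complement_def)

lemma mem_gA: "((i,j),(i',j')) \<in> gA k n r S s \<longleftrightarrow> i \<in> {1..k} \<and> j < n \<and> i' \<in> {1..k} \<and> j' < n \<and> (i,j) \<noteq> (i',j') \<and>
     (if i = i' then (if i = r then even (card S) else (i \<in> S \<longrightarrow> (j = s i \<or> j' = s i)))
      else ((i = r \<and> mainv S s i' j') \<or> (i' = r \<and> mainv S s i j)))"
  by (simp add: gA_def)

lemma mem_gM: "((i,j),(i',j')) \<in> gM k n D s \<longleftrightarrow> i \<in> {1..k} \<and> j < n \<and> i' \<in> {1..k} \<and> j' < n \<and> (i,j) \<noteq> (i',j') \<and>
     (if i = i' then i \<in> D \<and> (j = s i \<or> j' = s i)
      else mainv D s i j \<and> mainv D s i' j')"
  by (simp add: gM_def)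

lemma lc_A_center_even:
  assumes "r \<in> {1..k}" "t < n" "finite S" "r \<notin> S" "even (card S)"
  shows "local_complement (r,t) (gA k n r S s) = gM k n (insert r S) (s(r:=t))"
  using assms by (intro pair_set_eqI) (auto simp: mem_lc mem_gA mem_gM mainv_def)

lemma lc_A_center_odd:
  assumes "r \<in> {1..k}" "t < n" "finite S" "r \<notin> S" "odd (card S)"
  shows "local_complement (r,t) (gA k n r S s) = gM k n S s"
  using assms by (intro pair_set_eqI) (auto simp: mem_lc mem_gA mem_gM mainv_def)

lemma lc_A_special:
  assumes "i \<in> S" "finite S" "r \<notin> S" "s i < n" "i \<in> {1..k}"
  shows "local_complement (i, s i) (gA k n r S s) = gA k n r (S - {i}) s"
proof (intro pair_set_eqI)
  fix a b a' b'
  have c: "even (card (S - {i})) \<longleftrightarrow> odd (card S)"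
    using assms card_Suc_Diff1[of _ i, symmetric] by (metis even_Suc)
  have m: "\<And>x y. mainv (S - {i}) s x y = (if x = i then True else mainv S s x y)"
    using assms by (auto simp: mainv_def)
  have ir: "i \<noteq> r" using assms by auto
  show "((a,b),(a',b')) \<in> local_complement (i, s i) (gA k n r S s) \<longleftrightarrow> ((a,b),(a',b')) \<in> gA k n r (S - {i}) s"
    using assms c ir by (cases "a = i"; cases "a' = i"; cases "a = r"; cases "a' = r") (auto simp: mem_lc mem_gA m mainv_def)
qed

lemma lc_A_pendant:
  assumes "i \<in> S" "j \<noteq> s i" "r \<notin> S"
  shows "local_complement (i, j) (gA k n r S s) = gA k n r S s"
  using assms by (intro pair_set_eqI) (auto simp: mem_lc mem_gA mainv_def)

lemma lc_M_pendant:
  assumes "i \<in> D" "j \<noteq> s i"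
  shows "local_complement (i, j) (gM k n D s) = gM k n D s"
  using assms by (intro pair_set_eqI) (auto simp: mem_lc mem_gM mainv_def)

lemma lc_M_dec:
  assumes "i \<in> D" "finite D" "odd (card D)" "s i < n" "i \<in> {1..k}"
  shows "local_complement (i, s i) (gM k n D s) = gA k n i (D - {i}) s"
proof (intro pair_set_eqI)
  fix a b a' b'
  have c: "even (card (D - {i}))"
    using assms card_Suc_Diff1[of _ i, symmetric] by (metis even_Suc)
  have m: "\<And>x y. mainv (D - {i}) s x y = (if x = i then True else mainv D s x y)"
    using assms by (auto simp: mainv_def)
  show "((a,b),(a',b')) \<in> local_complement (i, s i) (gM k n D s) \<longleftrightarrow> ((a,b),(a',b')) \<in> gA k n i (D - {i}) s"
    using assms c by (cases "a = i"; cases "a' = i") (auto simp: mem_lc mem_gA mem_gM m mainv_def)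
qed

lemma lc_M_Q:
  assumes "i \<notin> D" "finite D" "odd (card D)" "j < n" "i \<in> {1..k}"
  shows "local_complement (i, j) (gM k n D s) = gA k n i D s"
  using assms by (intro pair_set_eqI) (auto simp: mem_lc mem_gA mem_gM mainv_def)

lemma lc_A_plain:
  assumes "i \<notin> S" "i \<noteq> r" "finite S" "r \<notin> S" "j < n" "i \<in> {1..k}"
  shows "local_complement (i, j) (gA k n r S s) = gA k n r (insert i S) (s(i:=j))"
proof (intro pair_set_eqI)
  fix a b a' b'
  have c: "even (card (insert i S)) \<longleftrightarrow> odd (card S)"
    using assms by simp
  have m: "\<And>x y. mainv (insert i S) (s(i:=j)) x y = (if x = i then y = j else mainv S s x y)"
    using assms by (auto simp: mainv_def)
  have m2: "\<And>y. mainv S s i y"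
    using assms by (auto simp: mainv_def)
  show "((a,b),(a',b')) \<in> local_complement (i, j) (gA k n r S s) \<longleftrightarrow> ((a,b),(a',b')) \<in> gA k n r (insert i S) (s(i:=j))"
  proof (cases "a = i")
    case True
    then show ?thesis using assms c m2 by (cases "a' = i"; cases "a' = r") (auto simp: mem_lc mem_gA m)
  next
    case False
    then show ?thesis using assms c m2 by (cases "a' = i"; cases "a' = r"; cases "a = r") (auto simp: mem_lc mem_gA m)
  qed
qed

lemma mem_V: "(i,j) \<in> cs_vertices k (\<lambda>_. n) \<longleftrightarrow> i \<in> {1..k} \<and> j < n"
  by (simp add: cs_vertices_def)

definition famA :: "nat \<Rightarrow> nat \<Rightarrow> ((nat \<times> nat) \<times> (nat \<times> nat)) set \<Rightarrow> bool" where
  "famA k n E \<longleftrightarrow> (\<exists>r S s. E = gA k n r S s \<and> r \<in> {1..k} \<and> S \<subseteq> {1..k} - {r} \<and> (\<forall>i. s i < n))"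

definition famM :: "nat \<Rightarrow> nat \<Rightarrow> ((nat \<times> nat) \<times> (nat \<times> nat)) set \<Rightarrow> bool" where
  "famM k n E \<longleftrightarrow> (\<exists>D s. E = gM k n D s \<and> D \<subseteq> {1..k} \<and> odd (card D) \<and> (\<forall>i. s i < n))"

lemma base_A: "clique_star k (\<lambda>_. n) r = gA k n r {} s"
  by (intro pair_set_eqI) (auto simp: clique_star_def cs_vertices_def mem_gA mainv_def)

lemma step_A:
  assumes "famA k n E" "v \<in> cs_vertices k (\<lambda>_. n)"
  shows "famA k n (local_complement v E) \<or> famM k n (local_complement v E)"
proof -
  obtain r S s where E: "E = gA k n r S s" and r: "r \<in> {1..k}" and S: "S \<subseteq> {1..k} - {r}" and s: "\<forall>i. s i < n"
    using assms(1) unfolding famA_def by blast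
  obtain i j where v: "v = (i,j)" and i: "i \<in> {1..k}" and j: "j < n"
    using assms(2) by (cases v) (auto simp: mem_V)
  have fS: "finite S" using S finite_subset by blast
  have rS: "r \<notin> S" using S by blast
  show ?thesis
  proof (cases "i = r")
    case True
    show ?thesis
    proof (cases "even (card S)")
      case True
      have "local_complement v E = gM k n (insert r S) (s(r:=j))"
        using lc_A_center_even[OF r j fS rS True] E v \<open>i = r\<close> by simp
      moreover have "odd (card (insert r S))" using True fS rS by simp
      ultimately have "famM k n (local_complement v E)"
        unfolding famM_def using S r s j by (intro exI[of _ "insert r S"] exI[of _ "s(r:=j)"]) auto
      then show ?thesis by blast
    next
      case False
      have "local_complement v E = gM k n S s"
        using lc_A_center_odd[OF r j fS rS] False E v \<open>i = r\<close> by simp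
      then have "famM k n (local_complement v E)"
        unfolding famM_def using S r s False by (intro exI[of _ S] exI[of _ s]) auto
      then show ?thesis by blast
    qed
  next
    case ir: False
    show ?thesis
    proof (cases "i \<in> S")
      case True
      show ?thesis
      proof (cases "j = s i")
        case True
        have "local_complement v E = gA k n r (S - {i}) s"
          using lc_A_special[OF \<open>i \<in> S\<close> fS rS _ i] s E v True by simp
        then have "famA k n (local_complement v E)"
          unfolding famA_def using S r s by (intro exI[of _ r] exI[of _ "S - {i}"] exI[of _ s]) auto
        then show ?thesis by blast
      next
        case False
        have "local_complement v E = E"
          using lc_A_pendant[where s=s and k=k and n=n, OF \<open>i \<in> S\<close> False rS] E v by simp
        then show ?thesis using assms(1) by simp
      qed
    next
      case False
      have "local_complement v E = gA k n r (insert i S) (s(i:=j))"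
        using lc_A_plain[OF False ir fS rS j i] E v by simp
      then have "famA k n (local_complement v E)"
        unfolding famA_def using S r s i ir j by (intro exI[of _ r] exI[of _ "insert i S"] exI[of _ "s(i:=j)"]) auto
      then show ?thesis by blast
    qed
  qed
qed

lemma step_M:
  assumes "famM k n E" "v \<in> cs_vertices k (\<lambda>_. n)"
  shows "famA k n (local_complement v E) \<or> famM k n (local_complement v E)"
proof -
  obtain D s where E: "E = gM k n D s" and D: "D \<subseteq> {1..k}" and o: "odd (card D)" and s: "\<forall>i. s i < n"
    using assms(1) unfolding famM_def by blast
  obtain i j where v: "v = (i,j)" and i: "i \<in> {1..k}" and j: "j < n"
    using assms(2) by (cases v) (auto simp: mem_V)
  have fD: "finite D" using D finite_subset by blast
  show ?thesis
  proof (cases "i \<in> D")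
    case True
    show ?thesis
    proof (cases "j = s i")
      case True
      have "local_complement v E = gA k n i (D - {i}) s"
        using lc_M_dec[OF \<open>i \<in> D\<close> fD o _ i] s E v True by simp
      then have "famA k n (local_complement v E)"
        unfolding famA_def using D i s by (intro exI[of _ i] exI[of _ "D - {i}"] exI[of _ s]) auto
      then show ?thesis by blast
    next
      case False
      have "local_complement v E = E"
        using lc_M_pendant[where s=s and k=k and n=n, OF \<open>i \<in> D\<close> False] E v by simp
      then show ?thesis using assms(1) by simp
    qed
  next
    case False
    have "local_complement v E = gA k n i D s"
      using lc_M_Q[OF False fD o j i] E v by simp
    then have "famA k n (local_complement v E)"
      unfolding famA_def using D i s False by (intro exI[of _ i] exI[of _ D] exI[of _ s]) auto
    then show ?thesis by blast
  qed
qed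

lemma orbit_fam:
  assumes "r \<in> {1..k}" "0 < n" "E \<in> lc_orbit (cs_vertices k (\<lambda>_. n)) (clique_star k (\<lambda>_. n) r)"
  shows "famA k n E \<or> famM k n E"
  using assms(3)
proof (induction rule: lc_orbit.induct)
  case base
  have "famA k n (gA k n r {} (\<lambda>_. 0))"
    unfolding famA_def using assms(1,2) by (intro exI[of _ r] exI[of _ "{}"] exI[of _ "\<lambda>_. 0"]) auto
  then show ?case using base_A[of k n r "\<lambda>_. 0"] by simp
next
  case (step F v)
  then show ?case using step_A step_M by blast
qed

definition sw :: "nat \<Rightarrow> nat \<Rightarrow> nat \<Rightarrow> nat" where
  "sw a b j = (if j = a then b else if j = b then a else j)"

lemma sw_sw[simp]: "sw a b (sw a b j) = j" by (simp add: sw_def)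
lemma sw_lt: "a < n \<Longrightarrow> b < n \<Longrightarrow> j < n \<Longrightarrow> sw a b j < n" by (simp add: sw_def)
lemma sw_inj[simp]: "sw a b x = sw a b y \<longleftrightarrow> x = y" by (metis sw_sw)
lemma sw_b[simp]: "sw a b x = b \<longleftrightarrow> x = a" by (auto simp: sw_def)

lemma block_bij:
  assumes "bij_betw \<pi> {1..k} {1..k}" "\<And>i j. \<sigma> i (\<sigma> i j) = j" "\<And>i j. j < n \<Longrightarrow> \<sigma> i j < n"
  shows "bij_betw (\<lambda>(i,j). (\<pi> i, \<sigma> i j)) (cs_vertices k (\<lambda>_. n)) (cs_vertices k (\<lambda>_. n))"
proof (rule bij_betw_byWitness[where f' = "\<lambda>(i',j'). (inv_into {1..k} \<pi> i', \<sigma> (inv_into {1..k} \<pi> i') j')"])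
  have l: "\<And>i. i \<in> {1..k} \<Longrightarrow> inv_into {1..k} \<pi> (\<pi> i) = i"
    using assms(1) bij_betw_inv_into_left by fastforce
  have r: "\<And>i. i \<in> {1..k} \<Longrightarrow> \<pi> (inv_into {1..k} \<pi> i) = i"
    using assms(1) bij_betw_inv_into_right by fastforce
  have p: "\<And>i. i \<in> {1..k} \<Longrightarrow> \<pi> i \<in> {1..k}"
    using assms(1) bij_betwE by blast
  have q: "\<And>i. i \<in> {1..k} \<Longrightarrow> inv_into {1..k} \<pi> i \<in> {1..k}"
    using assms(1) by (metis bij_betw_def inv_into_into)
  show "\<forall>a\<in>cs_vertices k (\<lambda>_. n). (case (case a of (i, j) \<Rightarrow> (\<pi> i, \<sigma> i j)) of (i', j') \<Rightarrow> (inv_into {1..k} \<pi> i', \<sigma> (inv_into {1..k} \<pi> i') j')) = a"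
    using l assms(2) by (auto simp: cs_vertices_def)
  show "\<forall>a\<in>cs_vertices k (\<lambda>_. n). (case (case a of (i', j') \<Rightarrow> (inv_into {1..k} \<pi> i', \<sigma> (inv_into {1..k} \<pi> i') j')) of (i, j) \<Rightarrow> (\<pi> i, \<sigma> i j)) = a"
    using r assms(2) by (auto simp: cs_vertices_def)
  show "(\<lambda>(i, j). (\<pi> i, \<sigma> i j)) ` cs_vertices k (\<lambda>_. n) \<subseteq> cs_vertices k (\<lambda>_. n)"
    using p assms(3) by (auto simp: cs_vertices_def)
  show "(\<lambda>(i', j'). (inv_into {1..k} \<pi> i', \<sigma> (inv_into {1..k} \<pi> i') j')) ` cs_vertices k (\<lambda>_. n) \<subseteq> cs_vertices k (\<lambda>_. n)"
    using q assms(3) by (auto simp: cs_vertices_def)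
qed

lemma iso_A:
  assumes \<pi>: "bij_betw \<pi> {1..k} {1..k}" and pr: "\<pi> r = r'" and pS: "\<pi> ` S = S'"
    and S: "S \<subseteq> {1..k} - {r}" and s: "\<forall>i. s i < n" and s': "\<forall>i. s' i < n" and r: "r \<in> {1..k}"
  shows "graph_iso (cs_vertices k (\<lambda>_. n)) (gA k n r S s) (gA k n r' S' s')"
proof -
  define \<sigma> where "\<sigma> i = sw (s i) (s' (\<pi> i))" for i
  have bij: "bij_betw (\<lambda>(i,j). (\<pi> i, \<sigma> i j)) (cs_vertices k (\<lambda>_. n)) (cs_vertices k (\<lambda>_. n))"
    by (rule block_bij[OF \<pi>]) (auto simp: \<sigma>_def s s' sw_lt)
  have inj: "\<And>i i2. i \<in> {1..k} \<Longrightarrow> i2 \<in> {1..k} \<Longrightarrow> \<pi> i = \<pi> i2 \<longleftrightarrow> i = i2"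
    using \<pi> by (metis bij_betw_imp_inj_on inj_on_eq_iff)
  have pr2: "\<And>i. i \<in> {1..k} \<Longrightarrow> \<pi> i = r' \<longleftrightarrow> i = r"
    using inj[OF _ r] pr by auto
  have pS2: "\<And>i. i \<in> {1..k} \<Longrightarrow> \<pi> i \<in> S' \<longleftrightarrow> i \<in> S"
    using inj S pS by auto
  have cS: "card S' = card S"
    using pS S inj by (metis bij_betw_imp_inj_on \<pi> card_image inj_on_subset Diff_subset subset_trans)
  have p: "\<And>i. i \<in> {1..k} \<Longrightarrow> \<pi> i \<in> {1..k}"
    using \<pi> bij_betwE by blast
  have sg: "\<And>i j. \<sigma> i j = s' (\<pi> i) \<longleftrightarrow> j = s i" by (simp add: \<sigma>_def)
  have sgi: "\<And>i j j2. \<sigma> i j = \<sigma> i j2 \<longleftrightarrow> j = j2" by (simp add: \<sigma>_def)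
  have sgl: "\<And>i j. j < n \<Longrightarrow> \<sigma> i j < n" by (simp add: \<sigma>_def s s' sw_lt)
  have key: "((i,j),(i2,j2)) \<in> gA k n r S s \<longleftrightarrow> ((\<pi> i, \<sigma> i j),(\<pi> i2, \<sigma> i2 j2)) \<in> gA k n r' S' s'"
    if "i \<in> {1..k}" "j < n" "i2 \<in> {1..k}" "j2 < n" for i j i2 j2
  proof (cases "i = i2")
    case True
    then show ?thesis using that p sgl pr2 pS2 cS sg sgi by (auto simp: mem_gA mainv_def)
  next
    case False
    then show ?thesis using that p sgl pr2 pS2 cS sg sgi inj by (auto simp: mem_gA mainv_def)
  qed
  show ?thesis
    unfolding graph_iso_def
    apply (rule exI[of _ "\<lambda>(i,j). (\<pi> i, \<sigma> i j)"])
    apply (intro conjI ballI)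
     apply (rule bij)
    subgoal for x y by (cases x; cases y) (simp add: mem_V key)
    done
qed

lemma iso_M:
  assumes \<pi>: "bij_betw \<pi> {1..k} {1..k}" and pD: "\<pi> ` D = D'"
    and D: "D \<subseteq> {1..k}" and s: "\<forall>i. s i < n" and s': "\<forall>i. s' i < n"
  shows "graph_iso (cs_vertices k (\<lambda>_. n)) (gM k n D s) (gM k n D' s')"
proof -
  define \<sigma> where "\<sigma> i = sw (s i) (s' (\<pi> i))" for i
  have bij: "bij_betw (\<lambda>(i,j). (\<pi> i, \<sigma> i j)) (cs_vertices k (\<lambda>_. n)) (cs_vertices k (\<lambda>_. n))"
    by (rule block_bij[OF \<pi>]) (auto simp: \<sigma>_def s s' sw_lt)
  have inj: "\<And>i i2. i \<in> {1..k} \<Longrightarrow> i2 \<in> {1..k} \<Longrightarrow> \<pi> i = \<pi> i2 \<longleftrightarrow> i = i2"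
    using \<pi> by (metis bij_betw_imp_inj_on inj_on_eq_iff)
  have pD2: "\<And>i. i \<in> {1..k} \<Longrightarrow> \<pi> i \<in> D' \<longleftrightarrow> i \<in> D"
    using inj D pD by auto
  have p: "\<And>i. i \<in> {1..k} \<Longrightarrow> \<pi> i \<in> {1..k}"
    using \<pi> bij_betwE by blast
  have sg: "\<And>i j. \<sigma> i j = s' (\<pi> i) \<longleftrightarrow> j = s i" by (simp add: \<sigma>_def)
  have sgi: "\<And>i j j2. \<sigma> i j = \<sigma> i j2 \<longleftrightarrow> j = j2" by (simp add: \<sigma>_def)
  have sgl: "\<And>i j. j < n \<Longrightarrow> \<sigma> i j < n" by (simp add: \<sigma>_def s s' sw_lt)
  have key: "((i,j),(i2,j2)) \<in> gM k n D s \<longleftrightarrow> ((\<pi> i, \<sigma> i j),(\<pi> i2, \<sigma> i2 j2)) \<in> gM k n D' s'"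
    if "i \<in> {1..k}" "j < n" "i2 \<in> {1..k}" "j2 < n" for i j i2 j2
  proof (cases "i = i2")
    case True
    then show ?thesis using that p sgl pD2 sg sgi by (auto simp: mem_gM mainv_def)
  next
    case False
    then show ?thesis using that p sgl pD2 sg sgi inj by (auto simp: mem_gM mainv_def)
  qed
  show ?thesis
    unfolding graph_iso_def
    apply (rule exI[of _ "\<lambda>(i,j). (\<pi> i, \<sigma> i j)"])
    apply (intro conjI ballI)
     apply (rule bij)
    subgoal for x y by (cases x; cases y) (simp add: mem_V key)
    done
qed

lemma exists_bij_map:
  assumes "finite U" "finite U'" "card U = card U'" "A \<subseteq> U" "B \<subseteq> U'" "card A = card B"
  shows "\<exists>\<pi>. bij_betw \<pi> U U' \<and> \<pi> ` A = B"
proof -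
  have fA: "finite A" "finite B" using assms finite_subset by auto
  obtain g1 where g1: "bij_betw g1 A B" using finite_same_card_bij[OF fA assms(6)] by blast
  have "card (U - A) = card (U' - B)" using assms fA by (simp add: card_Diff_subset)
  then obtain g2 where g2: "bij_betw g2 (U - A) (U' - B)"
    using finite_same_card_bij assms by (meson finite_Diff)
  define \<pi> where "\<pi> x = (if x \<in> A then g1 x else g2 x)" for x
  have b1: "bij_betw \<pi> A B" using g1 by (rule bij_betw_cong[THEN iffD1, rotated]) (simp add: \<pi>_def)
  have b2: "bij_betw \<pi> (U - A) (U' - B)" using g2 by (rule bij_betw_cong[THEN iffD1, rotated]) (simp add: \<pi>_def)
  have "bij_betw \<pi> (A \<union> (U - A)) (B \<union> (U' - B))" by (rule bij_betw_combine[OF b1 b2]) auto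
  moreover have "A \<union> (U - A) = U" "B \<union> (U' - B) = U'" using assms by auto
  ultimately show ?thesis using b1 bij_betw_imp_surj_on by metis
qed

lemma exists_perm_A:
  fixes k r r' :: nat
  assumes "r \<in> {1..k}" "r' \<in> {1..k}" "S \<subseteq> {1..k} - {r}" "S' \<subseteq> {1..k} - {r'}" "card S = card S'"
  shows "\<exists>\<pi>. bij_betw \<pi> {1..k} {1..k} \<and> \<pi> r = r' \<and> \<pi> ` S = S'"
proof -
  have "card ({1..k} - {r}) = card ({1..k} - {r'})" using assms by simp
  moreover have ff: "finite ({1..k} - {r})" "finite ({1..k} - {r'})" by auto
  ultimately have "\<exists>\<pi>0. bij_betw \<pi>0 ({1..k} - {r}) ({1..k} - {r'}) \<and> \<pi>0 ` S = S'"
    using exists_bij_map[of "{1..k} - {r}" "{1..k} - {r'}" S S', OF ff] assms by auto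
  then obtain \<pi>0 where p0: "bij_betw \<pi>0 ({1..k} - {r}) ({1..k} - {r'})" "\<pi>0 ` S = S'"
    by blast
  define \<pi> where "\<pi> x = (if x = r then r' else \<pi>0 x)" for x
  have b1: "bij_betw \<pi> {r} {r'}" by (simp add: \<pi>_def bij_betw_def)
  have b2: "bij_betw \<pi> ({1..k} - {r}) ({1..k} - {r'})"
    using p0(1) by (rule bij_betw_cong[THEN iffD1, rotated]) (simp add: \<pi>_def)
  have "bij_betw \<pi> ({r} \<union> ({1..k} - {r})) ({r'} \<union> ({1..k} - {r'}))" by (rule bij_betw_combine[OF b1 b2]) auto
  moreover have "{r} \<union> ({1..k} - {r}) = {1..k}" "{r'} \<union> ({1..k} - {r'}) = {1..k}" using assms by auto
  moreover have "\<pi> ` S = S'" using p0(2) assms(3) by (auto simp: \<pi>_def)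
  ultimately show ?thesis by (metis \<pi>_def)
qed

definition nb :: "('a \<times> 'a) set \<Rightarrow> 'a \<Rightarrow> 'a set" where "nb E x = {y. (x,y) \<in> E}"
definition pend :: "'a set \<Rightarrow> ('a \<times> 'a) set \<Rightarrow> 'a set" where "pend V E = {x\<in>V. card (nb E x) = 1}"
definition qp :: "'a set \<Rightarrow> ('a \<times> 'a) set \<Rightarrow> bool" where
  "qp V E \<longleftrightarrow> (\<exists>x\<in>V. \<exists>y\<in>V. x \<noteq> y \<and> (x,y) \<in> E \<and> (\<exists>z. (x,z) \<in> E \<and> z \<in> pend V E) \<and> (\<exists>z. (y,z) \<in> E \<and> z \<in> pend V E))
     \<or> (\<exists>x\<in>V. \<forall>y\<in>V. y \<noteq> x \<longrightarrow> (x,y) \<in> E)"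
definition ginv :: "'a set \<Rightarrow> ('a \<times> 'a) set \<Rightarrow> bool \<times> nat" where
  "ginv V E = (qp V E, card (pend V E))"

lemma iso_sym:
  assumes "graph_iso V E F" shows "graph_iso V F E"
proof -
  obtain f where f: "bij_betw f V V" and e: "\<forall>x\<in>V. \<forall>y\<in>V. (x, y) \<in> E \<longleftrightarrow> (f x, f y) \<in> F"
    using assms unfolding graph_iso_def by blast
  define g where "g = inv_into V f"
  have g: "bij_betw g V V" using f by (simp add: g_def bij_betw_inv_into)
  have fg: "\<And>x. x \<in> V \<Longrightarrow> f (g x) = x" using f by (simp add: g_def bij_betw_inv_into_right)
  have gV: "\<And>x. x \<in> V \<Longrightarrow> g x \<in> V" using g bij_betwE by blast
  have "\<forall>x\<in>V. \<forall>y\<in>V. (x, y) \<in> F \<longleftrightarrow> (g x, g y) \<in> E"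
  proof (intro ballI)
    fix x y assume xy: "x \<in> V" "y \<in> V"
    have "(g x, g y) \<in> E \<longleftrightarrow> (f (g x), f (g y)) \<in> F" using e gV[OF xy(1)] gV[OF xy(2)] by blast
    then show "(x, y) \<in> F \<longleftrightarrow> (g x, g y) \<in> E" using fg xy by simp
  qed
  then show ?thesis unfolding graph_iso_def using g by blast
qed

lemma iso_inv_dir:
  assumes "graph_iso V E F" "E \<subseteq> V \<times> V" "F \<subseteq> V \<times> V"
  shows "card (pend V E) = card (pend V F) \<and> (qp V E \<longrightarrow> qp V F)"
proof -
  obtain f where f: "bij_betw f V V" and e: "\<forall>x\<in>V. \<forall>y\<in>V. (x, y) \<in> E \<longleftrightarrow> (f x, f y) \<in> F"
    using assms unfolding graph_iso_def by blast
  have fV: "\<And>x. x \<in> V \<Longrightarrow> f x \<in> V" using f bij_betwE by blast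
  have inj: "inj_on f V" using f bij_betw_imp_inj_on by blast
  have surj: "f ` V = V" using f bij_betw_imp_surj_on by blast
  have nbE: "nb E x \<subseteq> V" for x using assms(2) by (auto simp: nb_def)
  have nbimg: "nb F (f x) = f ` nb E x" if "x \<in> V" for x
  proof
    show "f ` nb E x \<subseteq> nb F (f x)" using e that nbE by (auto simp: nb_def)
  next
    show "nb F (f x) \<subseteq> f ` nb E x"
    proof
      fix y' assume "y' \<in> nb F (f x)"
      then have "(f x, y') \<in> F" by (simp add: nb_def)
      then have "y' \<in> V" using assms(3) by auto
      then obtain y where "y \<in> V" "y' = f y" using surj by blast
      then show "y' \<in> f ` nb E x" using e that \<open>(f x, y') \<in> F\<close> by (auto simp: nb_def)
    qed
  qed
  have cnb: "card (nb F (f x)) = card (nb E x)" if "x \<in> V" for x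
  proof -
    have "inj_on f (nb E x)" using inj nbE by (rule inj_on_subset)
    then show ?thesis using nbimg[OF that] by (simp add: card_image)
  qed
  have pm: "z \<in> pend V E \<longleftrightarrow> f z \<in> pend V F" if "z \<in> V" for z
    using cnb[OF that] fV[OF that] that by (simp add: pend_def)
  have pimg: "pend V F = f ` pend V E"
  proof
    show "f ` pend V E \<subseteq> pend V F" using pm by (auto simp: pend_def)
  next
    show "pend V F \<subseteq> f ` pend V E"
    proof
      fix y' assume y': "y' \<in> pend V F"
      then have "y' \<in> V" by (simp add: pend_def)
      then obtain y where y: "y \<in> V" "y' = f y" using surj by blast
      then have "y \<in> pend V E" using pm y' by simp
      then show "y' \<in> f ` pend V E" using y by blast
    qed
  qed
  have c: "card (pend V E) = card (pend V F)"
  proof -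
    have "pend V E \<subseteq> V" by (auto simp: pend_def)
    then have "inj_on f (pend V E)" using inj inj_on_subset by blast
    then show ?thesis using pimg by (simp add: card_image)
  qed
  have q: "qp V F" if "qp V E"
  proof -
    { assume "\<exists>x\<in>V. \<exists>y\<in>V. x \<noteq> y \<and> (x,y) \<in> E \<and> (\<exists>z. (x,z) \<in> E \<and> z \<in> pend V E) \<and> (\<exists>z. (y,z) \<in> E \<and> z \<in> pend V E)"
      then obtain x y z1 z2 where xy: "x \<in> V" "y \<in> V" "x \<noteq> y" "(x,y) \<in> E" "(x,z1) \<in> E" "z1 \<in> pend V E" "(y,z2) \<in> E" "z2 \<in> pend V E"
        by blast
      have z: "z1 \<in> V" "z2 \<in> V" using xy assms(2) by auto
      have "f x \<noteq> f y" using inj xy by (simp add: inj_on_eq_iff)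
      moreover have "(f x, f y) \<in> F" "(f x, f z1) \<in> F" "(f y, f z2) \<in> F" using e xy z by auto
      moreover have "f z1 \<in> pend V F" "f z2 \<in> pend V F" using pm xy z by auto
      ultimately have ?thesis unfolding qp_def using fV xy by blast }
    moreover
    { assume "\<exists>x\<in>V. \<forall>y\<in>V. y \<noteq> x \<longrightarrow> (x,y) \<in> E"
      then obtain x where x: "x \<in> V" "\<forall>y\<in>V. y \<noteq> x \<longrightarrow> (x,y) \<in> E" by blast
      have "\<forall>y'\<in>V. y' \<noteq> f x \<longrightarrow> (f x, y') \<in> F"
      proof (intro ballI impI)
        fix y' assume "y' \<in> V" "y' \<noteq> f x"
        then obtain y where "y \<in> V" "y' = f y" using surj by blast
        then show "(f x, y') \<in> F" using x e \<open>y' \<noteq> f x\<close> by auto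
      qed
      then have ?thesis unfolding qp_def using fV x by blast }
    ultimately show ?thesis using that unfolding qp_def by blast
  qed
  show ?thesis using c q by blast
qed

lemma iso_ginv:
  assumes "graph_iso V E F" "E \<subseteq> V \<times> V" "F \<subseteq> V \<times> V"
  shows "ginv V E = ginv V F"
  using iso_inv_dir[OF assms] iso_inv_dir[OF iso_sym[OF assms(1)] assms(3,2)]
  by (auto simp: ginv_def)

lemma card_quot_inv:
  assumes "\<forall>E\<in>Orb. \<forall>F\<in>Orb. R E F \<longleftrightarrow> g E = g F"
  shows "card (Orb // {(E,F). E \<in> Orb \<and> F \<in> Orb \<and> R E F}) = card (g ` Orb)"
proof -
  let ?R = "{(E,F). E \<in> Orb \<and> F \<in> Orb \<and> R E F}"
  have im: "\<And>x. x \<in> Orb \<Longrightarrow> ?R `` {x} = {F\<in>Orb. g F = g x}" using assms by auto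
  have "Orb // ?R = (\<lambda>x. ?R `` {x}) ` Orb"
    unfolding quotient_def by auto
  also have "\<dots> = (\<lambda>x. {F\<in>Orb. g F = g x}) ` Orb"
    using im by (intro image_cong) auto
  also have "\<dots> = (\<lambda>v. {F\<in>Orb. g F = v}) ` (g ` Orb)"
    by (simp add: image_image)
  finally have eq: "Orb // ?R = (\<lambda>v. {F\<in>Orb. g F = v}) ` (g ` Orb)" .
  have "inj_on (\<lambda>v. {F\<in>Orb. g F = v}) (g ` Orb)"
    by (auto simp: inj_on_def)
  then show ?thesis unfolding eq by (simp add: card_image)
qed

lemma two_nb: "(x,y1) \<in> E \<Longrightarrow> (x,y2) \<in> E \<Longrightarrow> y1 \<noteq> y2 \<Longrightarrow> card (nb E x) \<noteq> 1"
  by (metis card_1_singletonE mem_Collect_eq nb_def singletonD)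

lemma three:
  fixes k a :: nat
  assumes "k \<ge> 3" "a \<in> {1..k}"
  obtains i1 i2 where "i1 \<in> {1..k}" "i2 \<in> {1..k}" "i1 \<noteq> a" "i2 \<noteq> a" "i1 \<noteq> i2"
proof -
  consider "a = 1" | "a = 2" | "a \<noteq> 1 \<and> a \<noteq> 2" by blast
  then show ?thesis
  proof cases
    case 1 then show ?thesis using that[of 2 3] assms by auto
  next
    case 2 then show ?thesis using that[of 1 3] assms by auto
  next
    case 3 then show ?thesis using that[of 1 2] assms by auto
  qed
qed

lemma gA_sub: "gA k n r S s \<subseteq> cs_vertices k (\<lambda>_. n) \<times> cs_vertices k (\<lambda>_. n)"
  by (auto simp: gA_def cs_vertices_def)
lemma gM_sub: "gM k n D s \<subseteq> cs_vertices k (\<lambda>_. n) \<times> cs_vertices k (\<lambda>_. n)"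
  by (auto simp: gM_def cs_vertices_def)

lemma pend_A:
  assumes k: "k \<ge> 3" and n: "n \<ge> 2" and r: "r \<in> {1..k}" and S: "S \<subseteq> {1..k} - {r}" and s: "\<forall>i. s i < n"
  shows "pend (cs_vertices k (\<lambda>_. n)) (gA k n r S s) = {(i,j). i \<in> S \<and> j < n \<and> j \<noteq> s i}"
proof (intro set_eqI iffI)
  fix x assume x: "x \<in> {(i,j). i \<in> S \<and> j < n \<and> j \<noteq> s i}"
  then obtain i j where ij: "x = (i,j)" "i \<in> S" "j < n" "j \<noteq> s i" by blast
  have "nb (gA k n r S s) (i,j) = {(i, s i)}"
    using ij S s by (auto simp: nb_def mem_gA mainv_def split: if_splits)
  then show "x \<in> pend (cs_vertices k (\<lambda>_. n)) (gA k n r S s)"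
    using ij S by (auto simp: pend_def mem_V)
next
  fix x assume x: "x \<in> pend (cs_vertices k (\<lambda>_. n)) (gA k n r S s)"
  then obtain i j where ij: "x = (i,j)" "i \<in> {1..k}" "j < n" and c: "card (nb (gA k n r S s) (i,j)) = 1"
    by (cases x) (auto simp: pend_def mem_V)
  show "x \<in> {(i,j). i \<in> S \<and> j < n \<and> j \<noteq> s i}"
  proof (rule ccontr)
    assume nx: "x \<notin> {(i,j). i \<in> S \<and> j < n \<and> j \<noteq> s i}"
    show False
    proof (cases "i = r")
      case True
      obtain i1 i2 where "i1 \<in> {1..k}" "i2 \<in> {1..k}" "i1 \<noteq> r" "i2 \<noteq> r" "i1 \<noteq> i2"
        using three[OF k r] by blast
      then have hh: "((i,j),(i1, s i1)) \<in> gA k n r S s" "((i,j),(i2, s i2)) \<in> gA k n r S s"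
        using True ij s by (auto simp: mem_gA mainv_def)
      have "card (nb (gA k n r S s) (i,j)) \<noteq> 1" by (rule two_nb[OF hh]) (use \<open>i1 \<noteq> i2\<close> in simp)
      then show False using c by simp
    next
      case False
      have m: "mainv S s i j" using nx ij by (auto simp: mainv_def)
      have hh: "((i,j),(r, 0)) \<in> gA k n r S s" "((i,j),(r, 1)) \<in> gA k n r S s"
        using False ij m r n by (auto simp: mem_gA)
      have "card (nb (gA k n r S s) (i,j)) \<noteq> 1" by (rule two_nb[OF hh]) simp
      then show False using c by simp
    qed
  qed
qed

lemma pend_M:
  assumes k: "k \<ge> 3" and n: "n \<ge> 2" and D: "D \<subseteq> {1..k}" and s: "\<forall>i. s i < n"
  shows "pend (cs_vertices k (\<lambda>_. n)) (gM k n D s) = {(i,j). i \<in> D \<and> j < n \<and> j \<noteq> s i}"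
proof (intro set_eqI iffI)
  fix x assume x: "x \<in> {(i,j). i \<in> D \<and> j < n \<and> j \<noteq> s i}"
  then obtain i j where ij: "x = (i,j)" "i \<in> D" "j < n" "j \<noteq> s i" by blast
  have "nb (gM k n D s) (i,j) = {(i, s i)}"
    using ij D s by (auto simp: nb_def mem_gM mainv_def split: if_splits)
  then show "x \<in> pend (cs_vertices k (\<lambda>_. n)) (gM k n D s)"
    using ij D by (auto simp: pend_def mem_V)
next
  fix x assume x: "x \<in> pend (cs_vertices k (\<lambda>_. n)) (gM k n D s)"
  then obtain i j where ij: "x = (i,j)" "i \<in> {1..k}" "j < n" and c: "card (nb (gM k n D s) (i,j)) = 1"
    by (cases x) (auto simp: pend_def mem_V)
  show "x \<in> {(i,j). i \<in> D \<and> j < n \<and> j \<noteq> s i}"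
  proof (rule ccontr)
    assume nx: "x \<notin> {(i,j). i \<in> D \<and> j < n \<and> j \<noteq> s i}"
    have m: "mainv D s i j" using nx ij by (auto simp: mainv_def)
    obtain i1 i2 where "i1 \<in> {1..k}" "i2 \<in> {1..k}" "i1 \<noteq> i" "i2 \<noteq> i" "i1 \<noteq> i2"
      using three[OF k ij(2)] by blast
    then have hh: "((i,j),(i1, s i1)) \<in> gM k n D s" "((i,j),(i2, s i2)) \<in> gM k n D s"
      using m ij s by (auto simp: mem_gM mainv_def)
    have "card (nb (gM k n D s) (i,j)) \<noteq> 1" by (rule two_nb[OF hh]) (use \<open>i1 \<noteq> i2\<close> in simp)
    then show False using c by simp
  qed
qed

lemma card_pendset:
  assumes "finite S" "\<forall>i. s i < n"
  shows "card {(i,j). i \<in> S \<and> j < n \<and> j \<noteq> s i} = card S * (n - 1)"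
proof -
  have "{(i,j). i \<in> S \<and> j < n \<and> j \<noteq> s i} = (SIGMA i:S. {0..<n} - {s i})" by auto
  moreover have "card (SIGMA i:S. {0..<n} - {s i}) = (\<Sum>i\<in>S. card ({0..<n} - {s i}))"
    using assms by (simp add: card_SigmaI)
  moreover have "\<And>i. card ({0..<n} - {s i}) = n - 1" using assms by simp
  ultimately show ?thesis by simp
qed

lemma supp_A:
  assumes "((a,b),(i,j')) \<in> gA k n r S s" "i \<in> S" "j' \<noteq> s i" "r \<notin> S"
  shows "a = i \<and> b = s i"
  using assms by (auto simp: mem_gA mainv_def split: if_splits)

lemma other_j:
  assumes "(n::nat) \<ge> 2" "x < n"
  obtains j where "j < n" "j \<noteq> x"
  using assms that[of "if x = 0 then 1 else 0"] by auto

lemma qp_A0: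
  assumes k: "k \<ge> 3" and n: "n \<ge> 2" and r: "r \<in> {1..k}"
  shows "qp (cs_vertices k (\<lambda>_. n)) (gA k n r {} s)"
proof -
  have "\<forall>y\<in>cs_vertices k (\<lambda>_. n). y \<noteq> (r,0) \<longrightarrow> ((r,0),y) \<in> gA k n r {} s"
    using r n by (auto simp: cs_vertices_def mem_gA mainv_def)
  moreover have "(r,0) \<in> cs_vertices k (\<lambda>_. n)" using r n by (simp add: mem_V)
  ultimately show ?thesis unfolding qp_def by blast
qed

lemma qp_A:
  assumes k: "k \<ge> 3" and n: "n \<ge> 2" and r: "r \<in> {1..k}" and S: "S \<subseteq> {1..k} - {r}" and s: "\<forall>i. s i < n"
    and ne: "S \<noteq> {}"
  shows "\<not> qp (cs_vertices k (\<lambda>_. n)) (gA k n r S s)"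
proof -
  let ?V = "cs_vertices k (\<lambda>_. n)"
  let ?E = "gA k n r S s"
  have rS: "r \<notin> S" using S by blast
  have P: "pend ?V ?E = {(i,j). i \<in> S \<and> j < n \<and> j \<noteq> s i}" by (rule pend_A[OF k n r S s])
  have sup: "\<exists>i\<in>S. x = (i, s i)" if h: "(x,z) \<in> ?E" "z \<in> pend ?V ?E" for x z
  proof -
    obtain i j' where z: "z = (i,j')" "i \<in> S" "j' \<noteq> s i" using h(2) P by auto
    obtain a b where x: "x = (a,b)" by (cases x)
    show ?thesis using supp_A[of a b i j' k n r S s] h(1) z x rS by auto
  qed
  have n1: "\<not> (\<exists>x\<in>?V. \<exists>y\<in>?V. x \<noteq> y \<and> (x,y) \<in> ?E \<and> (\<exists>z. (x,z) \<in> ?E \<and> z \<in> pend ?V ?E) \<and> (\<exists>z. (y,z) \<in> ?E \<and> z \<in> pend ?V ?E))"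
  proof
    assume "\<exists>x\<in>?V. \<exists>y\<in>?V. x \<noteq> y \<and> (x,y) \<in> ?E \<and> (\<exists>z. (x,z) \<in> ?E \<and> z \<in> pend ?V ?E) \<and> (\<exists>z. (y,z) \<in> ?E \<and> z \<in> pend ?V ?E)"
    then obtain x y z1 z2 where xy: "x \<noteq> y" "(x,y) \<in> ?E" "(x,z1) \<in> ?E" "z1 \<in> pend ?V ?E" "(y,z2) \<in> ?E" "z2 \<in> pend ?V ?E"
      by blast
    obtain i where i: "i \<in> S" "x = (i, s i)" using sup[OF xy(3,4)] by blast
    obtain i2 where i2: "i2 \<in> S" "y = (i2, s i2)" using sup[OF xy(5,6)] by blast
    have ne: "i \<noteq> i2" using xy(1) i i2 by auto
    have "i \<noteq> r" "i2 \<noteq> r" using i i2 rS by auto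
    then have "((i, s i), (i2, s i2)) \<notin> ?E" using ne by (simp add: mem_gA)
    then show False using xy(2) i i2 by simp
  qed
  have n2: "\<not> (\<exists>x\<in>?V. \<forall>y\<in>?V. y \<noteq> x \<longrightarrow> (x,y) \<in> ?E)"
  proof
    assume "\<exists>x\<in>?V. \<forall>y\<in>?V. y \<noteq> x \<longrightarrow> (x,y) \<in> ?E"
    then obtain a b where ab: "(a,b) \<in> ?V" "\<forall>y\<in>?V. y \<noteq> (a,b) \<longrightarrow> ((a,b),y) \<in> ?E" by auto
    show False
    proof (cases "a = r")
      case True
      obtain i where i: "i \<in> S" using ne by blast
      obtain j' where j': "j' < n" "j' \<noteq> s i" using other_j[OF n] s by metis
      have iV: "(i, j') \<in> ?V" using i S j' by (auto simp: mem_V)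
      have "((a,b),(i,j')) \<notin> ?E" using True i j' rS by (auto simp: mem_gA mainv_def)
      moreover have "(i,j') \<noteq> (a,b)" using True i rS by auto
      ultimately show False using ab iV by blast
    next
      case False
      obtain i1 i2 where ii: "i1 \<in> {1..k}" "i2 \<in> {1..k}" "i1 \<noteq> r" "i2 \<noteq> r" "i1 \<noteq> i2"
        using three[OF k r] by blast
      define i' where "i' = (if i1 = a then i2 else i1)"
      have i': "i' \<in> {1..k}" "i' \<noteq> r" "i' \<noteq> a" using ii by (auto simp: i'_def)
      have iV: "(i', 0) \<in> ?V" using i' n by (auto simp: mem_V)
      have "((a,b),(i',0)) \<notin> ?E" using False i' by (auto simp: mem_gA)
      moreover have "(i',0) \<noteq> (a,b)" using i' by auto
      ultimately show False using ab iV by blast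
    qed
  qed
  show ?thesis using n1 n2 unfolding qp_def by blast
qed


lemma qp_M:
  assumes k: "k \<ge> 3" and n: "n \<ge> 2" and D: "D \<subseteq> {1..k}" and o: "odd (card D)" and s: "\<forall>i. s i < n"
  shows "qp (cs_vertices k (\<lambda>_. n)) (gM k n D s)"
proof -
  let ?V = "cs_vertices k (\<lambda>_. n)"
  let ?E = "gM k n D s"
  have "D \<noteq> {}" using o by auto
  then obtain d where d: "d \<in> D" by blast
  show ?thesis
  proof (cases "D = {d}")
    case True
    have "\<forall>y\<in>?V. y \<noteq> (d, s d) \<longrightarrow> ((d, s d),y) \<in> ?E"
      using True s d D by (auto simp: cs_vertices_def mem_gM mainv_def)
    moreover have "(d, s d) \<in> ?V" using d D s by (auto simp: mem_V)
    ultimately show ?thesis unfolding qp_def by blast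
  next
    case False
    then obtain d2 where d2: "d2 \<in> D" "d2 \<noteq> d" using d by blast
    obtain j1 where j1: "j1 < n" "j1 \<noteq> s d" using other_j[OF n] s by metis
    obtain j2 where j2: "j2 < n" "j2 \<noteq> s d2" using other_j[OF n] s by metis
    have P: "pend ?V ?E = {(i,j). i \<in> D \<and> j < n \<and> j \<noteq> s i}" by (rule pend_M[OF k n D s])
    have "(d, j1) \<in> pend ?V ?E" "(d2, j2) \<in> pend ?V ?E" using P d d2 j1 j2 by auto
    moreover have "((d, s d), (d, j1)) \<in> ?E" "((d2, s d2), (d2, j2)) \<in> ?E" "((d, s d), (d2, s d2)) \<in> ?E"
      using d d2 j1 j2 D s by (auto simp: mem_gM mainv_def)
    moreover have "(d, s d) \<in> ?V" "(d2, s d2) \<in> ?V" using d d2 D s by (auto simp: mem_V)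
    moreover have "(d, s d) \<noteq> (d2, s d2)" using d2 by auto
    ultimately show ?thesis unfolding qp_def by blast
  qed
qed

lemma ginv_A:
  assumes k: "k \<ge> 3" and n: "n \<ge> 2" and r: "r \<in> {1..k}" and S: "S \<subseteq> {1..k} - {r}" and s: "\<forall>i. s i < n"
  shows "ginv (cs_vertices k (\<lambda>_. n)) (gA k n r S s) = (S = {}, card S * (n - 1))"
proof -
  have f: "finite S" using S finite_subset by blast
  have "card (pend (cs_vertices k (\<lambda>_. n)) (gA k n r S s)) = card S * (n - 1)"
    using pend_A[OF k n r S s] card_pendset[OF f s] by simp
  moreover have "qp (cs_vertices k (\<lambda>_. n)) (gA k n r S s) = (S = {})"
    using qp_A[OF k n r S s] qp_A0[OF k n r] by blast
  ultimately show ?thesis by (simp add: ginv_def)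
qed

lemma ginv_M:
  assumes k: "k \<ge> 3" and n: "n \<ge> 2" and D: "D \<subseteq> {1..k}" and o: "odd (card D)" and s: "\<forall>i. s i < n"
  shows "ginv (cs_vertices k (\<lambda>_. n)) (gM k n D s) = (True, card D * (n - 1))"
proof -
  have f: "finite D" using D finite_subset by blast
  have "card (pend (cs_vertices k (\<lambda>_. n)) (gM k n D s)) = card D * (n - 1)"
    using pend_M[OF k n D s] card_pendset[OF f s] by simp
  then show ?thesis using qp_M[OF k n D o s] by (simp add: ginv_def)
qed

lemma iso_AA:
  assumes k: "k \<ge> 3" and n: "n \<ge> 2"
    and a: "r \<in> {1..k}" "S \<subseteq> {1..k} - {r}" "\<forall>i. s i < n"
    and b: "r' \<in> {1..k}" "S' \<subseteq> {1..k} - {r'}" "\<forall>i. s' i < n"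
    and g: "ginv (cs_vertices k (\<lambda>_. n)) (gA k n r S s) = ginv (cs_vertices k (\<lambda>_. n)) (gA k n r' S' s')"
  shows "graph_iso (cs_vertices k (\<lambda>_. n)) (gA k n r S s) (gA k n r' S' s')"
proof -
  have n1: "n - 1 > 0" using n by simp
  have "(S = {}, card S * (n - 1)) = (S' = {}, card S' * (n - 1))"
    using g ginv_A[OF k n a] ginv_A[OF k n b] by metis
  then have "card S * (n - 1) = card S' * (n - 1)" by (metis prod.inject)
  then have "card S = card S'" using n1 by simp
  then obtain \<pi> where "bij_betw \<pi> {1..k} {1..k}" "\<pi> r = r'" "\<pi> ` S = S'"
    using exists_perm_A[OF a(1) b(1) a(2) b(2)] by blast
  then show ?thesis using iso_A[of \<pi> k r r' S S' s n s'] a b by simp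
qed

lemma iso_MM:
  assumes k: "k \<ge> 3" and n: "n \<ge> 2"
    and a: "D \<subseteq> {1..k}" "odd (card D)" "\<forall>i. s i < n"
    and b: "D' \<subseteq> {1..k}" "odd (card D')" "\<forall>i. s' i < n"
    and g: "ginv (cs_vertices k (\<lambda>_. n)) (gM k n D s) = ginv (cs_vertices k (\<lambda>_. n)) (gM k n D' s')"
  shows "graph_iso (cs_vertices k (\<lambda>_. n)) (gM k n D s) (gM k n D' s')"
proof -
  have n1: "n - 1 > 0" using n by simp
  have "(True, card D * (n - 1)) = (True, card D' * (n - 1))"
    using g ginv_M[OF k n a] ginv_M[OF k n b] by metis
  then have "card D * (n - 1) = card D' * (n - 1)" by (metis prod.inject)
  then have "card D = card D'" using n1 by simp
  moreover have "finite {1..k::nat}" by simp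
  ultimately obtain \<pi> where "bij_betw \<pi> {1..k} {1..k}" "\<pi> ` D = D'"
    using exists_bij_map[of "{1..k}" "{1..k}" D D'] a b by blast
  then show ?thesis using iso_M[of \<pi> k D D' s n s'] a b by simp
qed

lemma ginv_AM:
  assumes k: "k \<ge> 3" and n: "n \<ge> 2"
    and a: "r \<in> {1..k}" "S \<subseteq> {1..k} - {r}" "\<forall>i. s i < n"
    and b: "D \<subseteq> {1..k}" "odd (card D)" "\<forall>i. s' i < n"
  shows "ginv (cs_vertices k (\<lambda>_. n)) (gA k n r S s) \<noteq> ginv (cs_vertices k (\<lambda>_. n)) (gM k n D s')"
proof
  assume g: "ginv (cs_vertices k (\<lambda>_. n)) (gA k n r S s) = ginv (cs_vertices k (\<lambda>_. n)) (gM k n D s')"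
  have n1: "n - 1 > 0" using n by simp
  have "(S = {}, card S * (n - 1)) = (True, card D * (n - 1))"
    using g ginv_A[OF k n a] ginv_M[OF k n b] by metis
  then have h1: "S = {}" and h2: "card S * (n - 1) = card D * (n - 1)" by (metis prod.inject)+
  then have "card D * (n - 1) = 0" by simp
  then show False using n1 b(2) by simp
qed

lemma iso_of_ginv:
  assumes k: "k \<ge> 3" and n: "n \<ge> 2"
    and E: "famA k n E \<or> famM k n E" and F: "famA k n F \<or> famM k n F"
    and g: "ginv (cs_vertices k (\<lambda>_. n)) E = ginv (cs_vertices k (\<lambda>_. n)) F"
  shows "graph_iso (cs_vertices k (\<lambda>_. n)) E F"
  using E
proof
  assume "famA k n E"
  then obtain r S s where a: "E = gA k n r S s" "r \<in> {1..k}" "S \<subseteq> {1..k} - {r}" "\<forall>i. s i < n"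
    unfolding famA_def by blast
  from F show ?thesis
  proof
    assume "famA k n F"
    then obtain r' S' s' where b: "F = gA k n r' S' s'" "r' \<in> {1..k}" "S' \<subseteq> {1..k} - {r'}" "\<forall>i. s' i < n"
      unfolding famA_def by blast
    show ?thesis using iso_AA[OF k n a(2-4) b(2-4)] g a(1) b(1) by simp
  next
    assume "famM k n F"
    then obtain D s' where b: "F = gM k n D s'" "D \<subseteq> {1..k}" "odd (card D)" "\<forall>i. s' i < n"
      unfolding famM_def by blast
    show ?thesis using ginv_AM[OF k n a(2-4) b(2-4)] g a(1) b(1) by simp
  qed
next
  assume "famM k n E"
  then obtain D s where a: "E = gM k n D s" "D \<subseteq> {1..k}" "odd (card D)" "\<forall>i. s i < n"
    unfolding famM_def by blast
  from F show ?thesis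
  proof
    assume "famA k n F"
    then obtain r' S' s' where b: "F = gA k n r' S' s'" "r' \<in> {1..k}" "S' \<subseteq> {1..k} - {r'}" "\<forall>i. s' i < n"
      unfolding famA_def by blast
    show ?thesis using ginv_AM[OF k n b(2-4) a(2-4)] g a(1) b(1) by simp
  next
    assume "famM k n F"
    then obtain D' s' where b: "F = gM k n D' s'" "D' \<subseteq> {1..k}" "odd (card D')" "\<forall>i. s' i < n"
      unfolding famM_def by blast
    show ?thesis using iso_MM[OF k n a(2-4) b(2-4)] g a(1) b(1) by simp
  qed
qed

lemma reach_A:
  assumes r: "r \<in> {1..k}" and n: "0 < n" and f: "finite S"
  shows "S \<subseteq> {1..k} - {r} \<Longrightarrow> gA k n r S (\<lambda>_. 0) \<in> lc_orbit (cs_vertices k (\<lambda>_. n)) (clique_star k (\<lambda>_. n) r)"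
  using f
proof (induction S rule: finite_induct)
  case empty
  then show ?case using base_A[of k n r "\<lambda>_. 0"] lc_orbit.base by metis
next
  case (insert i S)
  have IH: "gA k n r S (\<lambda>_. 0) \<in> lc_orbit (cs_vertices k (\<lambda>_. n)) (clique_star k (\<lambda>_. n) r)"
    using insert by blast
  have i: "i \<in> {1..k}" "i \<noteq> r" "r \<notin> S" using insert(4) by auto
  have eq: "local_complement (i, 0) (gA k n r S (\<lambda>_. 0)) = gA k n r (insert i S) (\<lambda>_. 0)"
    using lc_A_plain[where i=i and S=S and r=r and j=0 and n=n and k=k and s="\<lambda>_. 0"] insert(1,2) i n
    by (simp add: fun_upd_def)
  have "(i, 0) \<in> cs_vertices k (\<lambda>_. n)" using i n by (simp add: mem_V)
  then show ?case using lc_orbit.step[OF IH] eq by metis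
qed

lemma card_odd_le: "card {a::nat. a \<le> k \<and> odd a} = (k + 1) div 2"
proof -
  have "{a::nat. a \<le> k \<and> odd a} = (\<lambda>b. 2 * b + 1) ` {..< (k + 1) div 2}"
  proof (intro set_eqI iffI)
    fix a assume "a \<in> {a::nat. a \<le> k \<and> odd a}"
    then have a: "a \<le> k" "odd a" by auto
    then have "a = 2 * (a div 2) + 1" "a div 2 < (k + 1) div 2" by presburger+
    then show "a \<in> (\<lambda>b. 2 * b + 1) ` {..< (k + 1) div 2}" by blast
  next
    fix a assume "a \<in> (\<lambda>b. 2 * b + 1) ` {..< (k + 1) div 2}"
    then obtain b where "a = 2 * b + 1" "b < (k + 1) div 2" by auto
    then show "a \<in> {a::nat. a \<le> k \<and> odd a}" by (auto; presburger)
  qed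
  moreover have "inj_on (\<lambda>b::nat. 2 * b + 1) {..< (k + 1) div 2}" by (auto simp: inj_on_def)
  ultimately show ?thesis by (simp add: card_image)
qed

theorem theorem16:
  fixes k n r :: nat
  assumes "k \<ge> 3" and "n \<ge> 2" and "r \<in> {1..k}"
  shows "num_iso_classes (cs_vertices k (\<lambda>_. n))
           (lc_orbit (cs_vertices k (\<lambda>_. n)) (clique_star k (\<lambda>_. n) r))
         = (k + 1) div 2 + k"
proof -
  let ?V = "cs_vertices k (\<lambda>_. n)"
  let ?O = "lc_orbit (cs_vertices k (\<lambda>_. n)) (clique_star k (\<lambda>_. n) r)"
  have k: "k \<ge> 3" and n: "n \<ge> 2" and r: "r \<in> {1..k}" using assms by auto
  have n0: "0 < n" using n by simp
  have n1: "n - 1 > 0" using n by simp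
  have fam: "famA k n E \<or> famM k n E" if "E \<in> ?O" for E using orbit_fam[OF r n0 that] .
  have sub: "E \<subseteq> ?V \<times> ?V" if "E \<in> ?O" for E
  proof -
    from fam[OF that] show ?thesis
    proof
      assume "famA k n E" then show ?thesis unfolding famA_def using gA_sub by blast
    next
      assume "famM k n E" then show ?thesis unfolding famM_def using gM_sub by blast
    qed
  qed
  have eqv: "\<forall>E\<in>?O. \<forall>F\<in>?O. graph_iso ?V E F \<longleftrightarrow> ginv ?V E = ginv ?V F"
  proof (intro ballI iffI)
    fix E F assume "E \<in> ?O" "F \<in> ?O" "graph_iso ?V E F"
    then show "ginv ?V E = ginv ?V F" using iso_ginv sub by blast
  next
    fix E F assume "E \<in> ?O" "F \<in> ?O" "ginv ?V E = ginv ?V F"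
    then show "graph_iso ?V E F" using iso_of_ginv[OF k n] fam by blast
  qed
  define L where "L = (\<lambda>m. (m = 0, m * (n - 1))) ` {0..<k} \<union> (\<lambda>a. (True, a * (n - 1))) ` {a. a \<le> k \<and> odd a}"
  have img: "ginv ?V ` ?O = L"
  proof
    show "ginv ?V ` ?O \<subseteq> L"
    proof
      fix x assume "x \<in> ginv ?V ` ?O"
      then obtain E where E: "E \<in> ?O" "x = ginv ?V E" by blast
      from fam[OF E(1)] show "x \<in> L"
      proof
        assume "famA k n E"
        then obtain r' S s where a: "E = gA k n r' S s" "r' \<in> {1..k}" "S \<subseteq> {1..k} - {r'}" "\<forall>i. s i < n"
          unfolding famA_def by blast
        have fS: "finite S" using a(3) finite_subset by blast
        have "card S \<le> card ({1..k} - {r'})" using a(3) by (intro card_mono) auto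
        also have "\<dots> = k - 1" using a(2) by simp
        finally have cS: "card S < k" using k by simp
        have "x = (card S = 0, card S * (n - 1))" using E(2) a ginv_A[OF k n a(2-4)] fS by simp
        then show "x \<in> L" unfolding L_def using cS by auto
      next
        assume "famM k n E"
        then obtain D s where a: "E = gM k n D s" "D \<subseteq> {1..k}" "odd (card D)" "\<forall>i. s i < n"
          unfolding famM_def by blast
        have "card D \<le> card {1..k}" using a(2) by (intro card_mono) auto
        then have cD: "card D \<le> k" by simp
        have "x = (True, card D * (n - 1))" using E(2) a ginv_M[OF k n a(2-4)] by simp
        then show "x \<in> L" unfolding L_def using cD a(3) by auto
      qed
    qed
  next
    show "L \<subseteq> ginv ?V ` ?O"
    proof
      fix x assume "x \<in> L"
      then consider (A) m where "m < k" "x = (m = 0, m * (n - 1))" | (M) a where "a \<le> k" "odd a" "x = (True, a * (n - 1))"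
        unfolding L_def by auto
      then show "x \<in> ginv ?V ` ?O"
      proof cases
        case (A m)
        have "m \<le> card ({1..k} - {r})" using A(1) r by simp
        then obtain S where S: "S \<subseteq> {1..k} - {r}" "card S = m" "finite S"
          by (rule obtain_subset_with_card_n)
        have E: "gA k n r S (\<lambda>_. 0) \<in> ?O" using reach_A[OF r n0 S(3) S(1)] .
        have "ginv ?V (gA k n r S (\<lambda>_. 0)) = (S = {}, card S * (n - 1))"
          using ginv_A[OF k n r S(1)] n0 by simp
        also have "\<dots> = x"
        proof -
          have "(S = {}) = (card S = 0)" using S(3) by simp
          then show ?thesis using A(2) S(2) by simp
        qed
        finally show ?thesis using E by (metis image_eqI)
      next
        case (M a)
        have a1: "a \<ge> 1" using M(2) by (cases a) auto
        have "a - 1 \<le> card ({1..k} - {r})" using M(1) r by simp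
        then obtain S where S: "S \<subseteq> {1..k} - {r}" "card S = a - 1" "finite S"
          by (rule obtain_subset_with_card_n)
        have ev: "even (card S)" using S(2) M(2) a1 by simp
        have rS: "r \<notin> S" using S(1) by blast
        have E0: "gA k n r S (\<lambda>_. 0) \<in> ?O" using reach_A[OF r n0 S(3) S(1)] .
        have rV: "(r, 0) \<in> ?V" using r n0 by (simp add: mem_V)
        have "local_complement (r, 0) (gA k n r S (\<lambda>_. 0)) = gM k n (insert r S) ((\<lambda>_. 0)(r := 0))"
          by (rule lc_A_center_even[OF r n0 S(3) rS ev])
        also have "(\<lambda>_. 0::nat)(r := 0) = (\<lambda>_. 0)" by (simp add: fun_upd_def)
        finally have eq: "local_complement (r, 0) (gA k n r S (\<lambda>_. 0)) = gM k n (insert r S) (\<lambda>_. 0)" .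
        have E: "gM k n (insert r S) (\<lambda>_. 0) \<in> ?O" using lc_orbit.step[OF E0 rV] eq by simp
        have D: "insert r S \<subseteq> {1..k}" using S(1) r by auto
        have cD: "card (insert r S) = a" using S(2,3) rS a1 by simp
        have "ginv ?V (gM k n (insert r S) (\<lambda>_. 0)) = (True, a * (n - 1))"
          using ginv_M[OF k n D] cD M(2) n0 by simp
        then show ?thesis using E M(3) by (metis image_eqI)
      qed
    qed
  qed
  have cardL: "card L = k + (k + 1) div 2"
  proof -
    have i1: "inj_on (\<lambda>m. (m = 0, m * (n - 1))) {0..<k}" using n1 by (auto simp: inj_on_def)
    have i2: "inj_on (\<lambda>a. (True, a * (n - 1))) {a. a \<le> k \<and> odd a}" using n1 by (auto simp: inj_on_def)
    have d: "(\<lambda>m. (m = 0, m * (n - 1))) ` {0..<k} \<inter> (\<lambda>a. (True, a * (n - 1))) ` {a. a \<le> k \<and> odd a} = {}"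
      using n1 by (auto elim: oddE)
    have "card L = card ((\<lambda>m. (m = 0, m * (n - 1))) ` {0..<k}) + card ((\<lambda>a. (True, a * (n - 1))) ` {a. a \<le> k \<and> odd a})"
      unfolding L_def by (rule card_Un_disjoint) (use d in auto)
    also have "\<dots> = k + (k + 1) div 2" using i1 i2 card_odd_le[of k] by (simp add: card_image)
    finally show ?thesis .
  qed
  have "num_iso_classes ?V ?O = card (ginv ?V ` ?O)"
    unfolding num_iso_classes_def by (rule card_quot_inv[OF eqv])
  then show ?thesis using img cardL by simp
qed

end
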